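(* For $i=1,\dots,n$ let $X_i=\{0,1,\dots,m_i-1\}$ and let $P_i$ be an irreducible stochastic matrix on $X_i$ in detailed balance with a strictly positive probability measure $\sigma_i$. Let $\{1,\dots,n\}=C\sqcup N$ with $N\neq\emptyset$, $i_1=\min N$, $p^0_1,\dots,p^0_n>0$ summing to $1$, and assume $P_k$ is symmetric for every $k>i_1$. Let $P$ be the first crested product (see context). For each $i$ let $U_i$ be a real $m_i\times m_i$ matrix, $\Delta_i$ a real diagonal matrix and $D_i=\mathrm{diag}(\sigma_i(0),\dots,\sigma_i(m_i-1))$ such that $P_iU_i=U_i\Delta_i$, $U_i^TD_iU_i=I$, the column of $U_i$ indexed by $0$ is the all-ones vector and $(\Delta_i)_{00}=1$. Put $M_i=I_i^{\sigma_i\text{-norm}}$ if $i\in N$ and $M_i=U_i$ if $i\in C$, and $$U=\sum_{k=i_1+1}^nM_1\otimes\cdots\otimes M_{k-1}\otimes(U_k-A_k)\otimes A_{k+1}\otimes\cdots\otimes A_n+U_1\otimes\cdots\otimes U_{i_1}\otimes A_{i_1+1}\otimes\cdots\otimes A_n,$$ $$D=\bigotimes_{i=1}^nD_i,\qquad \Delta=\sum_{i\in C}p^0_i(I_1\otimes\cdots\otimes\Delta_i\otimes\cdots\otimes I_n)+\sum_{i\in N}p^0_i(I_1\otimes\cdots\otimes I_{i-1}\otimes\Delta_i\otimes J^{\mathrm{diag}}_{i+1}\otimes\cdots\otimes J^{\mathrm{diag}}_n).$$ Then $D$ is the diagonal matrix of a probability measure in detailed balance with $P$, $\Delta$ is diagonal,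 and $PU=U\Delta$, $U^TDU=I$.
   Context: The first crested product is $P=\sum_{i\in C}p^0_i(I_1\otimes\cdots\otimes I_{i-1}\otimes P_i\otimes I_{i+1}\otimes\cdots\otimes I_n)+\sum_{i\in N}p^0_i(I_1\otimes\cdots\otimes I_{i-1}\otimes P_i\otimes J_{i+1}\otimes\cdots\otimes J_n)$, where $I_i$ is the $m_i\times m_i$ identity and $J_i$ is the $m_i\times m_i$ matrix with all entries $1/m_i$. Kronecker products are indexed lexicographically: $(A\otimes B)_{(x,x'),(y,y')}=A_{x,y}B_{x',y'}$. $I_i^{\sigma_i\text{-norm}}=\mathrm{diag}(\sigma_i(0)^{-1/2},\dots,\sigma_i(m_i-1)^{-1/2})$; $A_i$ is the $m_i\times m_i$ matrix whose column $0$ has all entries $1$ and all other entries $0$; $J^{\mathrm{diag}}_i=\mathrm{diag}(1,0,\dots,0)$ of size $m_i$. Detailed balance: $\sigma_i(x)p_i(x,y)=\sigma_i(y)p_i(y,x)$. *)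

theory Defs
  imports Complex_Main "HOL-Library.FuncSet"
begin

text \<open>Matrices on a finite index set X are represented as functions
  X \<Rightarrow> X \<Rightarrow> real (entries outside X are irrelevant).\<close>

type_synonym 'a rmat = "'a \<Rightarrow> 'a \<Rightarrow> real"

definition mmult :: "'a set \<Rightarrow> 'a rmat \<Rightarrow> 'a rmat \<Rightarrow> 'a rmat" where
  "mmult X A B = (\<lambda>x y. \<Sum>z\<in>X. A x z * B z y)"

definition mtrans :: "'a rmat \<Rightarrow> 'a rmat" where
  "mtrans A = (\<lambda>x y. A y x)"

definition idm :: "'a rmat" where
  "idm = (\<lambda>x y. if x = y then 1 else 0)"

definition diagm :: "('a \<Rightarrow> real) \<Rightarrow> 'a rmat" where
  "diagm s = (\<lambda>x y. if x = y then s x else 0)"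

fun mpow :: "'a set \<Rightarrow> 'a rmat \<Rightarrow> nat \<Rightarrow> 'a rmat" where
  "mpow X A 0 = idm"
| "mpow X A (Suc k) = mmult X (mpow X A k) A"

definition mat_eq_on :: "'a set \<Rightarrow> 'a rmat \<Rightarrow> 'a rmat \<Rightarrow> bool" where
  "mat_eq_on X A B \<longleftrightarrow> (\<forall>x\<in>X. \<forall>y\<in>X. A x y = B x y)"

definition stochastic :: "'a set \<Rightarrow> 'a rmat \<Rightarrow> bool" where
  "stochastic X P \<longleftrightarrow> (\<forall>x\<in>X. \<forall>y\<in>X. P x y \<ge> 0) \<and> (\<forall>x\<in>X. (\<Sum>y\<in>X. P x y) = 1)"

definition irreducible_mat :: "'a set \<Rightarrow> 'a rmat \<Rightarrow> bool" where
  "irreducible_mat X P \<longleftrightarrow> (\<forall>x\<in>X. \<forall>y\<in>X. \<exists>k. mpow X P k x y > 0)"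

definition prob_measure_on :: "'a set \<Rightarrow> ('a \<Rightarrow> real) \<Rightarrow> bool" where
  "prob_measure_on X s \<longleftrightarrow> (\<forall>x\<in>X. s x \<ge> 0) \<and> (\<Sum>x\<in>X. s x) = 1"

definition detailed_balance :: "'a set \<Rightarrow> ('a \<Rightarrow> real) \<Rightarrow> 'a rmat \<Rightarrow> bool" where
  "detailed_balance X s P \<longleftrightarrow> (\<forall>x\<in>X. \<forall>y\<in>X. s x * P x y = s y * P y x)"

definition is_diag_on :: "'a set \<Rightarrow> 'a rmat \<Rightarrow> bool" where
  "is_diag_on X A \<longleftrightarrow> (\<forall>x\<in>X. \<forall>y\<in>X. x \<noteq> y \<longrightarrow> A x y = 0)"

definition states :: "nat \<Rightarrow> (nat \<Rightarrow> nat) \<Rightarrow> (nat \<Rightarrow> nat) set" where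
  "states n m = PiE {1..n} (\<lambda>i. {..<m i})"

definition kron :: "nat \<Rightarrow> (nat \<Rightarrow> nat rmat) \<Rightarrow> (nat \<Rightarrow> nat) rmat" where
  "kron n Ms = (\<lambda>x y. \<Prod>i\<in>{1..n}. Ms i (x i) (y i))"

definition Jmat :: "nat \<Rightarrow> nat rmat" where
  "Jmat mi = (\<lambda>x y. 1 / real mi)"

definition Amat :: "nat rmat" where
  "Amat = (\<lambda>x y. if y = 0 then 1 else 0)"

definition Jdiag :: "nat rmat" where
  "Jdiag = (\<lambda>x y. if x = 0 \<and> y = 0 then 1 else 0)"

definition signorm :: "(nat \<Rightarrow> real) \<Rightarrow> nat rmat" where
  "signorm s = diagm (\<lambda>x. 1 / sqrt (s x))"

definition crested1 :: "nat \<Rightarrow> (nat \<Rightarrow> nat) \<Rightarrow> nat set \<Rightarrow> nat set \<Rightarrow> (nat \<Rightarrow> real)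
    \<Rightarrow> (nat \<Rightarrow> nat rmat) \<Rightarrow> (nat \<Rightarrow> nat) rmat" where
  "crested1 n m C N p0 P = (\<lambda>x y.
     (\<Sum>i\<in>C. p0 i * kron n (\<lambda>j. if j = i then P i else idm) x y)
   + (\<Sum>i\<in>N. p0 i * kron n (\<lambda>j. if j < i then idm else if j = i then P i else Jmat (m j)) x y))"

end

theory Submission
  imports Defs "HOL-Library.FuncSet"
begin


lemma sum_single:
  assumes "finite X" "w \<in> X" "\<And>z. z \<in> X \<Longrightarrow> z \<noteq> w \<Longrightarrow> g z = 0"
  shows "sum g X = g w"
proof -
  have "sum g X = g w + sum g (X - {w})" using assms by (simp add: sum.remove)
  also have "sum g (X - {w}) = 0" using assms by (intro sum.neutral) auto
  finally show ?thesis by simp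
qed

lemma finite_states: "finite (states n m)"
  by (simp add: states_def finite_PiE)

lemma states_mem: "z \<in> states n m \<Longrightarrow> i \<in> {1..n} \<Longrightarrow> z i < m i"
  by (auto simp: states_def PiE_def Pi_def)

lemma states_ext: "z \<in> states n m \<Longrightarrow> w \<in> states n m \<Longrightarrow> z \<noteq> w \<Longrightarrow> \<exists>i\<in>{1..n}. z i \<noteq> w i"
  unfolding states_def using PiE_ext by blast

lemma sum_prod_states:
  "(\<Sum>z\<in>states n m. \<Prod>i\<in>{1..n}. g i (z i)) = (\<Prod>i\<in>{1..n}. \<Sum>a<m i. (g i a :: real))"
  unfolding states_def by (rule prod_sum_PiE[symmetric]) auto

lemma kron_zero: "i \<in> {1..n} \<Longrightarrow> Ms i (x i) (y i) = 0 \<Longrightarrow> kron n Ms x y = 0"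
  unfolding kron_def by (rule prod_zero) auto

lemma kron_apply:
  "(\<Sum>z\<in>states n m. kron n Q x z * (\<Prod>j\<in>{1..n}. g j (z j)))
     = (\<Prod>j\<in>{1..n}. \<Sum>a<m j. Q j (x j) a * g j a)"
proof -
  have "(\<Sum>z\<in>states n m. kron n Q x z * (\<Prod>j\<in>{1..n}. g j (z j)))
      = (\<Sum>z\<in>states n m. \<Prod>j\<in>{1..n}. Q j (x j) (z j) * g j (z j))"
    by (simp add: kron_def prod.distrib)
  also have "\<dots> = (\<Prod>j\<in>{1..n}. \<Sum>a<m j. Q j (x j) a * g j a)"
    by (rule sum_prod_states)
  finally show ?thesis .
qed

lemma mmult_diag_right:
  assumes "finite X" "y \<in> X" "\<And>z. z \<in> X \<Longrightarrow> z \<noteq> y \<Longrightarrow> B z y = 0"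
  shows "mmult X A B x y = A x y * B y y"
  unfolding mmult_def using assms by (subst sum_single[of X y]) auto

lemma mmult_gram:
  assumes "finite X" "\<And>z w. z \<in> X \<Longrightarrow> w \<in> X \<Longrightarrow> D z w = (if z = w then s z else 0)"
  shows "mmult X (mmult X (mtrans A) D) B x y = (\<Sum>z\<in>X. A z x * s z * B z y)"
proof -
  have "mmult X (mtrans A) D x w = A w x * s w" if "w \<in> X" for w
    unfolding mmult_def mtrans_def using assms that
    by (subst sum_single[of X w]) auto
  thus ?thesis unfolding mmult_def[of X "mmult X (mtrans A) D"]
    by (intro sum.cong) auto
qed

lemma sum_idm: "x \<in> X \<Longrightarrow> finite X \<Longrightarrow> (\<Sum>a\<in>X. idm x a * g a) = g x"
  unfolding idm_def by (subst sum_single[of X x]) auto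




lemma mpow_const:
  assumes fin: "finite X" and nn: "\<forall>x\<in>X. \<forall>y\<in>X. P x y \<ge> 0"
    and step: "\<forall>x\<in>X. \<forall>y\<in>X. P x y > 0 \<longrightarrow> s x = s y"
  shows "x \<in> X \<Longrightarrow> y \<in> X \<Longrightarrow> mpow X P k x y \<ge> 0 \<and> (mpow X P k x y > 0 \<longrightarrow> s x = (s y::real))"
proof (induction k arbitrary: y)
  case 0
  then show ?case by (simp add: idm_def)
next
  case (Suc k)
  have nn2: "\<forall>z\<in>X. mpow X P k x z * P z y \<ge> 0" using Suc nn by auto
  have "mpow X P (Suc k) x y \<ge> 0" using nn2 by (simp add: mmult_def sum_nonneg)
  moreover have "s x = s y" if pos: "mpow X P (Suc k) x y > 0"
  proof -
    have "\<exists>z\<in>X. mpow X P k x z * P z y > 0"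
    proof (rule ccontr)
      assume "\<not> ?thesis"
      hence "\<forall>z\<in>X. mpow X P k x z * P z y \<le> 0" by (simp add: not_less)
      hence "(\<Sum>z\<in>X. mpow X P k x z * P z y) \<le> 0" by (simp add: sum_nonpos)
      thus False using pos by (simp add: mmult_def)
    qed
    then obtain z where z: "z \<in> X" "mpow X P k x z * P z y > 0" by blast
    have a: "mpow X P k x z \<ge> 0" using Suc.IH[OF Suc.prems(1) z(1)] by simp
    have b: "P z y \<ge> 0" using nn z(1) Suc.prems by auto
    have "mpow X P k x z > 0" "P z y > 0" using z(2) a b
      by (auto simp: zero_less_mult_iff)
    thus ?thesis using Suc.IH[OF Suc.prems(1) z(1)] step z(1) Suc.prems by auto
  qed
  ultimately show ?case by blast
qed

locale cr =
  fixes n :: nat and m :: "nat \<Rightarrow> nat"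
    and P U Delta :: "nat \<Rightarrow> nat rmat" and sigma :: "nat \<Rightarrow> nat \<Rightarrow> real"
    and C N :: "nat set" and p0 :: "nat \<Rightarrow> real"
  assumes m_pos: "\<forall>i\<in>{1..n}. m i \<ge> 1"
    and stoch: "\<forall>i\<in>{1..n}. stochastic {..<m i} (P i)"
    and irred: "\<forall>i\<in>{1..n}. irreducible_mat {..<m i} (P i)"
    and sig_pos: "\<forall>i\<in>{1..n}. \<forall>x<m i. sigma i x > 0"
    and sig_prob: "\<forall>i\<in>{1..n}. prob_measure_on {..<m i} (sigma i)"
    and db: "\<forall>i\<in>{1..n}. detailed_balance {..<m i} (sigma i) (P i)"
    and CN_union: "C \<union> N = {1..n}" and CN_disj: "C \<inter> N = {}"
    and N_ne: "N \<noteq> {}"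
    and p0_pos: "\<forall>i\<in>{1..n}. p0 i > 0" and p0_sum: "(\<Sum>i\<in>{1..n}. p0 i) = 1"
    and symm: "\<forall>k\<in>{Min N<..n}. \<forall>x<m k. \<forall>y<m k. P k x y = P k y x"
    and Delta_diag: "\<forall>i\<in>{1..n}. is_diag_on {..<m i} (Delta i)"
    and eig: "\<forall>i\<in>{1..n}. mat_eq_on {..<m i} (mmult {..<m i} (P i) (U i))
                                               (mmult {..<m i} (U i) (Delta i))"
    and orth: "\<forall>i\<in>{1..n}. mat_eq_on {..<m i}
                 (mmult {..<m i} (mmult {..<m i} (mtrans (U i)) (diagm (sigma i))) (U i)) idm"
    and col0: "\<forall>i\<in>{1..n}. \<forall>x<m i. U i x 0 = 1"
    and Delta00: "\<forall>i\<in>{1..n}. Delta i 0 0 = 1"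
begin

definition "i1 = Min N"

lemma finN: "finite N" and N_sub: "N \<subseteq> {1..n}" and C_sub: "C \<subseteq> {1..n}"
  using CN_union by (auto intro: finite_subset)

lemma i1_N: "i1 \<in> N" unfolding i1_def using finN N_ne by simp

lemma i1_range: "i1 \<in> {1..n}" using i1_N N_sub by auto

lemma below_i1: "j < i1 \<Longrightarrow> j \<notin> N"
  unfolding i1_def using finN Min_le by fastforce

lemma below_i1_C: "j \<in> {1..n} \<Longrightarrow> j < i1 \<Longrightarrow> j \<in> C"
  using below_i1 CN_union by auto

lemma N_ge_i1: "i \<in> N \<Longrightarrow> i1 \<le> i"
  unfolding i1_def using finN by simp

lemma uniform:
  assumes k: "k \<in> {i1<..n}" and x: "x < m k"
  shows "sigma k x = 1 / real (m k)"
proof -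
  have k1: "k \<in> {1..n}" using k i1_range by auto
  have nn: "\<forall>x\<in>{..<m k}. \<forall>y\<in>{..<m k}. P k x y \<ge> 0"
    using stoch k1 by (simp add: stochastic_def)
  have st: "\<forall>x\<in>{..<m k}. \<forall>y\<in>{..<m k}. P k x y > 0 \<longrightarrow> sigma k x = sigma k y"
  proof (intro ballI impI)
    fix a b assume ab: "a \<in> {..<m k}" "b \<in> {..<m k}" "P k a b > 0"
    have "sigma k a * P k a b = sigma k b * P k b a"
      using db k1 ab by (simp add: detailed_balance_def)
    moreover have "P k b a = P k a b" using symm k ab unfolding i1_def by auto
    ultimately show "sigma k a = sigma k b" using ab(3) by simp
  qed
  have const: "sigma k y = sigma k x" if yy: "y < m k" for y
  proof -
    obtain t where "mpow {..<m k} (P k) t y x > 0"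
      using irred k1 yy x unfolding irreducible_mat_def by blast
    thus ?thesis using mpow_const[OF _ nn st, of y x t] yy x by auto
  qed
  have "1 = (\<Sum>y<m k. sigma k y)" using sig_prob k1 by (simp add: prob_measure_on_def)
  also have "\<dots> = (\<Sum>y<m k. sigma k x)" using const by (intro sum.cong) auto
  also have "\<dots> = real (m k) * sigma k x" by simp
  finally have "real (m k) * sigma k x = 1" by simp
  moreover have "m k \<ge> 1" using m_pos k1 by auto
  ultimately show ?thesis by (simp add: field_simps)
qed

definition ip :: "nat \<Rightarrow> (nat \<Rightarrow> real) \<Rightarrow> (nat \<Rightarrow> real) \<Rightarrow> real" where
  "ip i g h = (\<Sum>a<m i. g a * sigma i a * h a)"

lemma ip_U:
  assumes i: "i \<in> {1..n}" and b: "b < m i" "b' < m i"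
  shows "ip i (\<lambda>a. U i a b) (\<lambda>a. U i a b') = (if b = b' then 1 else 0)"
proof -
  have "mmult {..<m i} (mmult {..<m i} (mtrans (U i)) (diagm (sigma i))) (U i) b b' = idm b b'"
    using orth i b by (simp add: mat_eq_on_def)
  moreover have "mmult {..<m i} (mmult {..<m i} (mtrans (U i)) (diagm (sigma i))) (U i) b b'
     = (\<Sum>z<m i. U i z b * sigma i z * U i z b')"
    by (rule mmult_gram) (auto simp: diagm_def)
  ultimately show ?thesis by (simp add: ip_def idm_def)
qed

lemma ip_signorm:
  assumes i: "i \<in> {1..n}" and b: "b < m i" "b' < m i"
  shows "ip i (\<lambda>a. signorm (sigma i) a b) (\<lambda>a. signorm (sigma i) a b') = (if b = b' then 1 else 0)"
proof -
  have pos: "sigma i b > 0" using sig_pos i b by auto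
  have "ip i (\<lambda>a. signorm (sigma i) a b) (\<lambda>a. signorm (sigma i) a b')
     = (\<Sum>a<m i. if a = b then (if b = b' then 1 / sqrt (sigma i b) * sigma i b * (1 / sqrt (sigma i b)) else 0) else 0)"
    unfolding ip_def signorm_def diagm_def by (intro sum.cong) auto
  also have "\<dots> = (if b = b' then 1 / sqrt (sigma i b) * sigma i b * (1 / sqrt (sigma i b)) else 0)"
    using b by simp
  also have "\<dots> = (if b = b' then 1 else 0)"
    using pos by (cases "b = b'") (auto simp: field_simps)
  finally show ?thesis .
qed

lemma ip_U_one:
  assumes i: "i \<in> {1..n}" and b: "b < m i"
  shows "ip i (\<lambda>a. U i a b) (\<lambda>a. 1) = (if b = 0 then 1 else 0)"
proof -
  have "ip i (\<lambda>a. U i a b) (\<lambda>a. 1) = ip i (\<lambda>a. U i a b) (\<lambda>a. U i a 0)"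
    unfolding ip_def using col0 i by (intro sum.cong) auto
  also have "\<dots> = (if b = 0 then 1 else 0)"
    using ip_U[OF i b, of 0] b by auto
  finally show ?thesis .
qed

lemma ip_one_one: "i \<in> {1..n} \<Longrightarrow> ip i (\<lambda>a. 1) (\<lambda>a. 1) = 1"
  using sig_prob by (simp add: ip_def prob_measure_on_def)

lemma ip_sym: "ip i g h = ip i h g"
  unfolding ip_def by (simp add: mult_ac)

lemma sum_U_zero:
  assumes k: "k \<in> {i1<..n}" and b: "b < m k" "b \<noteq> 0"
  shows "(\<Sum>a<m k. U k a b) = 0"
proof -
  have k1: "k \<in> {1..n}" using k i1_range by auto
  have "0 = ip k (\<lambda>a. U k a b) (\<lambda>a. 1)" using ip_U_one[OF k1 b(1)] b by simp
  also have "\<dots> = (\<Sum>a<m k. U k a b * (1 / real (m k)))"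
    unfolding ip_def using uniform[OF k] by (intro sum.cong) auto
  also have "\<dots> = (\<Sum>a<m k. U k a b) / real (m k)"
    by (simp add: sum_divide_distrib)
  finally show ?thesis using m_pos k1 by force
qed

lemma eig_U:
  assumes i: "i \<in> {1..n}" and x: "x < m i" and b: "b < m i"
  shows "(\<Sum>a<m i. P i x a * U i a b) = U i x b * Delta i b b"
proof -
  have "mmult {..<m i} (P i) (U i) x b = mmult {..<m i} (U i) (Delta i) x b"
    using eig i x b by (simp add: mat_eq_on_def)
  also have "\<dots> = U i x b * Delta i b b"
    using Delta_diag i b by (intro mmult_diag_right) (auto simp: is_diag_on_def)
  finally show ?thesis by (simp add: mmult_def)
qed

end


context cr begin

definition "MM j = (if j \<in> N then signorm (sigma j) else U j)"
definition "L y = Max (insert i1 {j\<in>{i1<..n}. y j \<noteq> 0})"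
definition "fc y j = (\<lambda>a. if j < L y then MM j a (y j) else if j = L y then U j a (y j) else 1)"
definition "UU = (\<lambda>x y. (\<Sum>k\<in>{i1<..n}. kron n (\<lambda>j. if j < k then MM j
                              else if j = k then (\<lambda>a b. U k a b - Amat a b)
                              else Amat) x y)
               + kron n (\<lambda>j. if j \<le> i1 then U j else Amat) x y)"

lemma L_fin: "finite (insert i1 {j\<in>{i1<..n}. y j \<noteq> 0})" by auto

lemma L_ge: "i1 \<le> L y" unfolding L_def using L_fin by (intro Max_ge) auto

lemma L_le: "L y \<le> n" unfolding L_def using L_fin i1_range by (subst Max_le_iff) auto

lemma L_range: "L y \<in> {1..n}" using L_ge[of y] L_le[of y] i1_range by auto

lemma above_L: "j \<le> n \<Longrightarrow> L y < j \<Longrightarrow> y j = 0"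
proof (rule ccontr)
  assume a: "j \<le> n" "L y < j" "y j \<noteq> 0"
  hence "j \<in> insert i1 {j\<in>{i1<..n}. y j \<noteq> 0}" using L_ge[of y] by auto
  hence "j \<le> L y" unfolding L_def using L_fin by (intro Max_ge) auto
  thus False using a by simp
qed

lemma L_nz: "i1 < L y \<Longrightarrow> y (L y) \<noteq> 0"
proof -
  assume a: "i1 < L y"
  have "L y \<in> insert i1 {j\<in>{i1<..n}. y j \<noteq> 0}" unfolding L_def using L_fin by (intro Max_in) auto
  thus ?thesis using a by auto
qed

lemma MM_U: "j \<notin> N \<Longrightarrow> MM j = U j" by (simp add: MM_def)

lemma fc_U:
  assumes j: "j \<in> {1..n}" and nn: "\<not> (j < L y \<and> j \<in> N)" and a: "a < m j"
  shows "fc y j a = U j a (y j)"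
proof -
  consider "j < L y" | "j = L y" | "L y < j" by linarith
  thus ?thesis
  proof cases
    case 1 thus ?thesis using nn by (simp add: fc_def MM_U)
  next
    case 2 thus ?thesis by (simp add: fc_def)
  next
    case 3
    hence "y j = 0" using above_L j by auto
    thus ?thesis using 3 col0 j a by (simp add: fc_def)
  qed
qed

lemma UU_col:
  assumes y: "y \<in> states n m" and z: "z \<in> states n m"
  shows "UU z y = (\<Prod>j\<in>{1..n}. fc y j (z j))"
proof -
  have zm: "\<And>j. j \<in> {1..n} \<Longrightarrow> z j < m j" using states_mem z by blast
  have col0': "\<And>j. j \<in> {1..n} \<Longrightarrow> U j (z j) 0 - Amat (z j) 0 = 0"
    using col0 zm by (simp add: Amat_def)
  show ?thesis
  proof (cases "i1 < L y")
    case False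
    hence Li: "L y = i1" using L_ge[of y] by simp
    have yz: "y k = 0" if "k \<in> {i1<..n}" for k using above_L[of k y] that Li by auto
    have "(\<Sum>k\<in>{i1<..n}. kron n (\<lambda>j. if j < k then MM j
                              else if j = k then (\<lambda>a b. U k a b - Amat a b)
                              else Amat) z y) = 0"
    proof (intro sum.neutral ballI)
      fix k assume k: "k \<in> {i1<..n}"
      show "kron n (\<lambda>j. if j < k then MM j else if j = k then (\<lambda>a b. U k a b - Amat a b) else Amat) z y = 0"
        using k i1_range yz[OF k] col0' by (intro kron_zero[of k]) auto
    qed
    moreover have "kron n (\<lambda>j. if j \<le> i1 then U j else Amat) z y = (\<Prod>j\<in>{1..n}. fc y j (z j))"
      unfolding kron_def
    proof (intro prod.cong refl)
      fix j assume j: "j \<in> {1..n}"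
      show "(if j \<le> i1 then U j else Amat) (z j) (y j) = fc y j (z j)"
      proof (cases "j < i1")
        case True thus ?thesis using below_i1[OF True] Li by (simp add: fc_def MM_U)
      next
        case False thus ?thesis using Li above_L[of j y] j by (auto simp: fc_def Amat_def)
      qed
    qed
    ultimately show ?thesis unfolding UU_def by simp
  next
    case True
    define Lk where "Lk = L y"
    have Lk: "Lk \<in> {i1<..n}" using True L_le unfolding Lk_def by auto
    have ynz: "y Lk \<noteq> 0" using L_nz[OF True] unfolding Lk_def .
    have "(\<Sum>k\<in>{i1<..n}. kron n (\<lambda>j. if j < k then MM j
                              else if j = k then (\<lambda>a b. U k a b - Amat a b)
                              else Amat) z y)
        = kron n (\<lambda>j. if j < Lk then MM j
                              else if j = Lk then (\<lambda>a b. U Lk a b - Amat a b)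
                              else Amat) z y"
    proof (rule sum_single)
      fix k assume k: "k \<in> {i1<..n}" "k \<noteq> Lk"
      show "kron n (\<lambda>j. if j < k then MM j else if j = k then (\<lambda>a b. U k a b - Amat a b) else Amat) z y = 0"
      proof (cases "k < Lk")
        case True
        thus ?thesis using Lk ynz i1_range by (intro kron_zero[of Lk]) (auto simp: Amat_def)
      next
        case False
        hence "Lk < k" using k by simp
        hence "y k = 0" using above_L[of k y] k unfolding Lk_def by auto
        thus ?thesis using k i1_range col0' by (intro kron_zero[of k]) auto
      qed
    qed (use Lk in auto)
    also have "\<dots> = (\<Prod>j\<in>{1..n}. fc y j (z j))"
      unfolding kron_def
    proof (intro prod.cong refl)
      fix j assume j: "j \<in> {1..n}"
      show "(if j < Lk then MM j else if j = Lk then (\<lambda>a b. U Lk a b - Amat a b) else Amat) (z j) (y j)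
          = fc y j (z j)"
        using ynz above_L[of j y] j unfolding Lk_def by (auto simp: fc_def Amat_def)
    qed
    moreover have "kron n (\<lambda>j. if j \<le> i1 then U j else Amat) z y = 0"
      using Lk ynz i1_range by (intro kron_zero[of Lk]) (auto simp: Amat_def)
    ultimately show ?thesis unfolding UU_def by simp
  qed
qed

end


context cr begin

definition "sprod x = (\<Prod>j\<in>{1..n}. sigma j (x j))"
definition "DD = kron n (\<lambda>i. diagm (sigma i))"
definition "DDelta = (\<lambda>x y.
               (\<Sum>i\<in>C. p0 i * kron n (\<lambda>j. if j = i then Delta i else idm) x y)
             + (\<Sum>i\<in>N. p0 i * kron n (\<lambda>j. if j < i then idm
                                               else if j = i then Delta i else Jdiag) x y))"
definition "Pc = crested1 n m C N p0 P"

lemma DD_diag: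
  assumes z: "z \<in> states n m" and w: "w \<in> states n m"
  shows "DD z w = (if z = w then sprod z else 0)"
proof (cases "z = w")
  case True thus ?thesis by (simp add: DD_def kron_def sprod_def diagm_def)
next
  case False
  then obtain i where "i \<in> {1..n}" "z i \<noteq> w i" using states_ext z w by blast
  thus ?thesis using False unfolding DD_def by (simp add: kron_zero diagm_def)
qed

lemma fc_lt: "j < L y \<Longrightarrow> fc y j = (\<lambda>a. MM j a (y j))" by (simp add: fc_def)
lemma fc_eq: "fc y (L y) = (\<lambda>a. U (L y) a (y (L y)))" by (simp add: fc_def)
lemma fc_gt: "L y < j \<Longrightarrow> fc y j = (\<lambda>a. 1)" by (simp add: fc_def)

lemma ip_MM:
  assumes i: "i \<in> {1..n}" and b: "b < m i" "b' < m i"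
  shows "ip i (\<lambda>a. MM i a b) (\<lambda>a. MM i a b') = (if b = b' then 1 else 0)"
proof (cases "i \<in> N")
  case True
  hence "MM i = signorm (sigma i)" by (simp add: MM_def)
  thus ?thesis by (simp only:) (rule ip_signorm[OF assms])
next
  case False
  hence "MM i = U i" by (simp add: MM_def)
  thus ?thesis by (simp only:) (rule ip_U[OF assms])
qed

lemma prod_lt:
  assumes y: "y \<in> states n m" and y': "y' \<in> states n m" and lt: "L y < L y'"
  shows "(\<Prod>j\<in>{1..n}. ip j (fc y j) (fc y' j)) = 0 \<and> y \<noteq> y'"
proof -
  let ?k = "L y'"
  have k: "?k \<in> {1..n}" by (rule L_range)
  have nz: "y' ?k \<noteq> 0" using L_nz lt L_ge[of y] by (meson le_less_trans)
  have "y ?k = 0" using above_L[of ?k y] lt L_le by auto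
  hence ne: "y \<noteq> y'" using nz by auto
  have "ip ?k (fc y ?k) (fc y' ?k) = ip ?k (\<lambda>a. U ?k a (y' ?k)) (\<lambda>a. 1)"
    using fc_gt[OF lt] fc_eq[of y'] ip_sym by simp
  also have "\<dots> = 0" using ip_U_one[OF k, of "y' ?k"] nz states_mem[OF y' k] by simp
  finally have "(\<Prod>j\<in>{1..n}. ip j (fc y j) (fc y' j)) = 0" using k by (intro prod_zero) auto
  thus ?thesis using ne by simp
qed

lemma prod_ip:
  assumes y: "y \<in> states n m" and y': "y' \<in> states n m"
  shows "(\<Prod>j\<in>{1..n}. ip j (fc y j) (fc y' j)) = idm y y'"
proof -
  consider "L y < L y'" | "L y' < L y" | "L y = L y'" by linarith
  thus ?thesis
  proof cases
    case 1 thus ?thesis using prod_lt[OF y y'] by (simp add: idm_def)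
  next
    case 2
    have "(\<Prod>j\<in>{1..n}. ip j (fc y j) (fc y' j)) = (\<Prod>j\<in>{1..n}. ip j (fc y' j) (fc y j))"
      using ip_sym by simp
    moreover have "(\<Prod>j\<in>{1..n}. ip j (fc y' j) (fc y j)) = 0" "y' \<noteq> y"
      using prod_lt[OF y' y 2] by auto
    ultimately show ?thesis by (simp add: idm_def)
  next
    case 3
    have fac: "ip j (fc y j) (fc y' j) = (if y j = y' j then 1 else 0)" if j: "j \<in> {1..n}" for j
    proof -
      have b: "y j < m j" "y' j < m j" using states_mem y y' j by auto
      consider "j < L y" | "j = L y" | "L y < j" by linarith
      thus ?thesis
      proof cases
        case 1 thus ?thesis using fc_lt[of j y] fc_lt[of j y'] 3 ip_MM[OF j b] by simp
      next
        case 2 thus ?thesis using fc_eq[of y] fc_eq[of y'] 3 ip_U[OF j b] by simp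
      next
        case c: 3
        thus ?thesis using fc_gt[OF c] fc_gt[of y' j] 3 ip_one_one[OF j]
            above_L[of j y] above_L[of j y'] j by auto
      qed
    qed
    show ?thesis
    proof (cases "y = y'")
      case True thus ?thesis using fac by (simp add: idm_def)
    next
      case False
      then obtain i where i: "i \<in> {1..n}" "y i \<noteq> y' i" using states_ext y y' by blast
      have "(\<Prod>j\<in>{1..n}. ip j (fc y j) (fc y' j)) = 0"
        using i fac by (intro prod_zero) auto
      thus ?thesis using False by (simp add: idm_def)
    qed
  qed
qed

lemma orth_main:
  assumes y: "y \<in> states n m" and y': "y' \<in> states n m"
  shows "mmult (states n m) (mmult (states n m) (mtrans UU) DD) UU y y' = idm y y'"
proof -
  have "mmult (states n m) (mmult (states n m) (mtrans UU) DD) UU y y'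
      = (\<Sum>z\<in>states n m. UU z y * sprod z * UU z y')"
    by (rule mmult_gram[OF finite_states]) (rule DD_diag)
  also have "\<dots> = (\<Sum>z\<in>states n m. \<Prod>j\<in>{1..n}. fc y j (z j) * sigma j (z j) * fc y' j (z j))"
    using UU_col y y' by (intro sum.cong) (auto simp: sprod_def prod.distrib)
  also have "\<dots> = (\<Prod>j\<in>{1..n}. ip j (fc y j) (fc y' j))"
    unfolding ip_def by (rule sum_prod_states)
  also have "\<dots> = idm y y'" by (rule prod_ip[OF y y'])
  finally show ?thesis .
qed

end


context cr begin

lemma DDelta_off:
  assumes x: "x \<in> states n m" and y: "y \<in> states n m" and ne: "x \<noteq> y"
  shows "DDelta x y = 0"
proof -
  obtain j where j: "j \<in> {1..n}" "x j \<noteq> y j" using states_ext x y ne by blast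
  have b: "x j < m j" "y j < m j" using states_mem x y j(1) by auto
  have dj: "Delta j (x j) (y j) = 0" using Delta_diag j b by (auto simp: is_diag_on_def)
  have "kron n (\<lambda>jj. if jj = i then Delta i else idm) x y = 0" for i
    using j dj by (intro kron_zero[of j]) (auto simp: idm_def)
  moreover have "kron n (\<lambda>jj. if jj < i then idm else if jj = i then Delta i else Jdiag) x y = 0" for i
    using j dj by (intro kron_zero[of j]) (auto simp: idm_def Jdiag_def)
  ultimately show ?thesis unfolding DDelta_def by simp
qed

lemma termC:
  assumes x: "x \<in> states n m" and y: "y \<in> states n m" and i: "i \<in> C"
  shows "(\<Prod>j\<in>{1..n}. \<Sum>a<m j. (if j = i then P i else idm) (x j) a * fc y j a)
       = (\<Prod>j\<in>{1..n}. fc y j (x j)) * kron n (\<lambda>j. if j = i then Delta i else idm) y y"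
  unfolding kron_def prod.distrib[symmetric]
proof (intro prod.cong refl)
  fix j assume j: "j \<in> {1..n}"
  have b: "x j < m j" "y j < m j" using states_mem x y j by auto
  show "(\<Sum>a<m j. (if j = i then P i else idm) (x j) a * fc y j a)
       = fc y j (x j) * (if j = i then Delta i else idm) (y j) (y j)"
  proof (cases "j = i")
    case True
    have iN: "i \<notin> N" using i CN_disj by auto
    have "(\<Sum>a<m j. P j (x j) a * fc y j a) = (\<Sum>a<m j. P j (x j) a * U j a (y j))"
      using fc_U[OF j] iN True by (intro sum.cong) auto
    also have "\<dots> = U j (x j) (y j) * Delta j (y j) (y j)" by (rule eig_U[OF j b])
    finally show ?thesis using True fc_U[OF j, of y "x j"] iN b by simp
  next
    case False thus ?thesis using sum_idm[of "x j" "{..<m j}" "fc y j"] b by (simp add: idm_def)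
  qed
qed

lemma termN:
  assumes x: "x \<in> states n m" and y: "y \<in> states n m" and i: "i \<in> N"
  shows "(\<Prod>j\<in>{1..n}. \<Sum>a<m j. (if j < i then idm else if j = i then P i else Jmat (m j)) (x j) a * fc y j a)
       = (\<Prod>j\<in>{1..n}. fc y j (x j)) * kron n (\<lambda>j. if j < i then idm else if j = i then Delta i else Jdiag) y y"
proof (cases "i < L y")
  case True
  let ?k = "L y"
  have k: "?k \<in> {1..n}" by (rule L_range)
  have ki1: "?k \<in> {i1<..n}" using True N_ge_i1[OF i] L_le[of y] by auto
  have nz: "y ?k \<noteq> 0" using N_ge_i1[OF i] True by (intro L_nz) linarith
  have bk: "y ?k < m ?k" using states_mem y k by auto
  have "(\<Sum>a<m ?k. Jmat (m ?k) (x ?k) a * fc y ?k a) = (\<Sum>a<m ?k. U ?k a (y ?k)) / real (m ?k)"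
    unfolding fc_eq by (simp add: Jmat_def sum_divide_distrib)
  also have "\<dots> = 0" using sum_U_zero[OF ki1 bk nz] by simp
  finally have "(\<Prod>j\<in>{1..n}. \<Sum>a<m j. (if j < i then idm else if j = i then P i else Jmat (m j)) (x j) a * fc y j a) = 0"
    using True k by (intro prod_zero bexI[of _ ?k]) auto
  moreover have "kron n (\<lambda>j. if j < i then idm else if j = i then Delta i else Jdiag) y y = 0"
    using True k nz by (intro kron_zero[of ?k]) (auto simp: Jdiag_def)
  ultimately show ?thesis by simp
next
  case False
  show ?thesis
    unfolding kron_def prod.distrib[symmetric]
  proof (intro prod.cong refl)
    fix j assume j: "j \<in> {1..n}"
    have b: "x j < m j" "y j < m j" using states_mem x y j by auto
    show "(\<Sum>a<m j. (if j < i then idm else if j = i then P i else Jmat (m j)) (x j) a * fc y j a)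
       = fc y j (x j) * (if j < i then idm else if j = i then Delta i else Jdiag) (y j) (y j)"
    proof -
      consider "j < i" | "j = i" | "i < j" by linarith
      thus ?thesis
      proof cases
        case 1 thus ?thesis using sum_idm[of "x j" "{..<m j}" "fc y j"] b by (simp add: idm_def)
      next
        case 2
        have nn: "\<not> (j < L y \<and> j \<in> N)" using False 2 by simp
        have "(\<Sum>a<m j. P j (x j) a * fc y j a) = (\<Sum>a<m j. P j (x j) a * U j a (y j))"
          using fc_U[OF j nn] by (intro sum.cong) auto
        also have "\<dots> = U j (x j) (y j) * Delta j (y j) (y j)" by (rule eig_U[OF j b])
        finally show ?thesis using 2 fc_U[OF j nn b(1)] by simp
      next
        case 3
        have gt: "L y < j" using False 3 by simp
        have y0: "y j = 0" using above_L[OF _ gt] j by auto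
        have mj: "m j \<ge> 1" using m_pos j by auto
        show ?thesis using 3 fc_gt[OF gt] y0 mj by (simp add: Jmat_def Jdiag_def)
      qed
    qed
  qed
qed

lemma Pc_expand:
  "Pc x z = (\<Sum>i\<in>C. p0 i * kron n (\<lambda>j. if j = i then P i else idm) x z)
   + (\<Sum>i\<in>N. p0 i * kron n (\<lambda>j. if j < i then idm else if j = i then P i else Jmat (m j)) x z)"
  by (simp add: Pc_def crested1_def)

lemma eig_main:
  assumes x: "x \<in> states n m" and y: "y \<in> states n m"
  shows "mmult (states n m) Pc UU x y = mmult (states n m) UU DDelta x y"
proof -
  let ?S = "states n m"
  let ?F = "\<lambda>z. \<Prod>j\<in>{1..n}. fc y j (z j)"
  let ?KC = "\<lambda>i. kron n (\<lambda>j. if j = i then P i else idm)"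
  let ?KN = "\<lambda>i. kron n (\<lambda>j. if j < i then idm else if j = i then P i else Jmat (m j))"
  have "mmult ?S Pc UU x y = (\<Sum>z\<in>?S. Pc x z * ?F z)"
    unfolding mmult_def using UU_col y by (intro sum.cong) auto
  also have "\<dots> = (\<Sum>z\<in>?S. (\<Sum>i\<in>C. p0 i * (?KC i x z * ?F z)) + (\<Sum>i\<in>N. p0 i * (?KN i x z * ?F z)))"
    unfolding Pc_expand by (simp add: distrib_right sum_distrib_right mult.assoc)
  also have "\<dots> = (\<Sum>i\<in>C. p0 i * (\<Sum>z\<in>?S. ?KC i x z * ?F z)) + (\<Sum>i\<in>N. p0 i * (\<Sum>z\<in>?S. ?KN i x z * ?F z))"
    by (simp add: sum.distrib sum_distrib_left sum.swap[of _ ?S])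
  also have "\<dots> = (\<Sum>i\<in>C. p0 i * ((?F x) * kron n (\<lambda>j. if j = i then Delta i else idm) y y))
      + (\<Sum>i\<in>N. p0 i * ((?F x) * kron n (\<lambda>j. if j < i then idm else if j = i then Delta i else Jdiag) y y))"
  proof (intro arg_cong2[where f = "(+)"] sum.cong refl arg_cong2[where f = "(*)"])
    fix i assume i: "i \<in> C"
    show "(\<Sum>z\<in>?S. ?KC i x z * ?F z) = ?F x * kron n (\<lambda>j. if j = i then Delta i else idm) y y"
      by (subst kron_apply) (rule termC[OF x y i])
  next
    fix i assume i: "i \<in> N"
    show "(\<Sum>z\<in>?S. ?KN i x z * ?F z) = ?F x * kron n (\<lambda>j. if j < i then idm else if j = i then Delta i else Jdiag) y y"
      by (subst kron_apply) (rule termN[OF x y i])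
  qed
  also have "\<dots> = UU x y * DDelta y y"
    using UU_col[OF y x] by (simp add: DDelta_def distrib_left sum_distrib_left mult_ac)
  also have "\<dots> = mmult ?S UU DDelta x y"
    using DDelta_off y by (intro mmult_diag_right[symmetric] finite_states) auto
  finally show ?thesis .
qed

lemma kron_db:
  assumes "\<forall>j\<in>{1..n}. sigma j (x j) * Q j (x j) (y j) = sigma j (y j) * Q j (y j) (x j)"
  shows "sprod x * kron n Q x y = sprod y * kron n Q y x"
  unfolding sprod_def kron_def prod.distrib[symmetric] using assms by (intro prod.cong) auto

lemma db_main:
  assumes x: "x \<in> states n m" and y: "y \<in> states n m"
  shows "sprod x * Pc x y = sprod y * Pc y x"
proof -
  have b: "\<And>j. j \<in> {1..n} \<Longrightarrow> x j < m j \<and> y j < m j" using states_mem x y by auto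
  have idm_s: "\<And>j. sigma j (x j) * idm (x j) (y j) = sigma j (y j) * idm (y j) (x j)"
    by (simp add: idm_def)
  have P_s: "\<And>j. j \<in> {1..n} \<Longrightarrow> sigma j (x j) * P j (x j) (y j) = sigma j (y j) * P j (y j) (x j)"
    using db b by (simp add: detailed_balance_def)
  have C_t: "sprod x * kron n (\<lambda>j. if j = i then P i else idm) x y
           = sprod y * kron n (\<lambda>j. if j = i then P i else idm) y x" for i
    using idm_s P_s by (intro kron_db) auto
  have N_t: "sprod x * kron n (\<lambda>j. if j < i then idm else if j = i then P i else Jmat (m j)) x y
           = sprod y * kron n (\<lambda>j. if j < i then idm else if j = i then P i else Jmat (m j)) y x"
    if i: "i \<in> N" for i
  proof (intro kron_db ballI)
    fix j assume j: "j \<in> {1..n}"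
    show "sigma j (x j) * (if j < i then idm else if j = i then P i else Jmat (m j)) (x j) (y j) =
          sigma j (y j) * (if j < i then idm else if j = i then P i else Jmat (m j)) (y j) (x j)"
    proof -
      consider "j < i" | "j = i" | "i < j" by linarith
      thus ?thesis
      proof cases
        case 3
        have "j \<in> {i1<..n}" using 3 N_ge_i1[OF i] j by auto
        thus ?thesis using 3 uniform b[OF j] by (simp add: Jmat_def)
      qed (use idm_s P_s j in auto)
    qed
  qed
  show ?thesis
    unfolding Pc_expand distrib_left sum_distrib_left
    using C_t N_t by (simp add: mult.left_commute[of "sprod _"])
qed

lemma main:
  "(\<exists>s. mat_eq_on (states n m) DD (diagm s) \<and> prob_measure_on (states n m) s
        \<and> detailed_balance (states n m) s Pc)
   \<and> is_diag_on (states n m) DDelta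
   \<and> mat_eq_on (states n m) (mmult (states n m) Pc UU) (mmult (states n m) UU DDelta)
   \<and> mat_eq_on (states n m) (mmult (states n m) (mmult (states n m) (mtrans UU) DD) UU) idm"
proof (intro conjI exI)
  show "mat_eq_on (states n m) DD (diagm sprod)"
    using DD_diag by (simp add: mat_eq_on_def diagm_def)
  show "prob_measure_on (states n m) sprod"
    unfolding prob_measure_on_def
  proof
    show "\<forall>x\<in>states n m. 0 \<le> sprod x"
    proof
      fix x assume x: "x \<in> states n m"
      show "0 \<le> sprod x" unfolding sprod_def
        by (rule prod_nonneg) (use sig_pos states_mem[OF x] in force)
    qed
    have "(\<Sum>x\<in>states n m. sprod x) = (\<Prod>j\<in>{1..n}. \<Sum>a<m j. sigma j a)"
      unfolding sprod_def by (rule sum_prod_states)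
    also have "\<dots> = 1" using sig_prob by (intro prod.neutral) (simp add: prob_measure_on_def)
    finally show "(\<Sum>x\<in>states n m. sprod x) = 1" .
  qed
  show "detailed_balance (states n m) sprod Pc"
    using db_main by (simp add: detailed_balance_def)
  show "is_diag_on (states n m) DDelta"
    using DDelta_off by (simp add: is_diag_on_def)
  show "mat_eq_on (states n m) (mmult (states n m) Pc UU) (mmult (states n m) UU DDelta)"
    using eig_main by (simp add: mat_eq_on_def)
  show "mat_eq_on (states n m) (mmult (states n m) (mmult (states n m) (mtrans UU) DD) UU) idm"
    using orth_main by (simp add: mat_eq_on_def)
qed

end


theorem proposition4p5:
  fixes n :: nat and m :: "nat \<Rightarrow> nat"
    and P U Delta :: "nat \<Rightarrow> nat rmat" and sigma :: "nat \<Rightarrow> nat \<Rightarrow> real"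
    and C N :: "nat set" and p0 :: "nat \<Rightarrow> real"
  assumes m_pos: "\<forall>i\<in>{1..n}. m i \<ge> 1"
    and stoch: "\<forall>i\<in>{1..n}. stochastic {..<m i} (P i)"
    and irred: "\<forall>i\<in>{1..n}. irreducible_mat {..<m i} (P i)"
    and sig_pos: "\<forall>i\<in>{1..n}. \<forall>x<m i. sigma i x > 0"
    and sig_prob: "\<forall>i\<in>{1..n}. prob_measure_on {..<m i} (sigma i)"
    and db: "\<forall>i\<in>{1..n}. detailed_balance {..<m i} (sigma i) (P i)"
    and CN_union: "C \<union> N = {1..n}" and CN_disj: "C \<inter> N = {}"
    and N_ne: "N \<noteq> {}"
    and p0_pos: "\<forall>i\<in>{1..n}. p0 i > 0" and p0_sum: "(\<Sum>i\<in>{1..n}. p0 i) = 1"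
    and symm: "\<forall>k\<in>{Min N<..n}. \<forall>x<m k. \<forall>y<m k. P k x y = P k y x"
    and Delta_diag: "\<forall>i\<in>{1..n}. is_diag_on {..<m i} (Delta i)"
    and eig: "\<forall>i\<in>{1..n}. mat_eq_on {..<m i} (mmult {..<m i} (P i) (U i))
                                               (mmult {..<m i} (U i) (Delta i))"
    and orth: "\<forall>i\<in>{1..n}. mat_eq_on {..<m i}
                 (mmult {..<m i} (mmult {..<m i} (mtrans (U i)) (diagm (sigma i))) (U i)) idm"
    and col0: "\<forall>i\<in>{1..n}. \<forall>x<m i. U i x 0 = 1"
    and Delta00: "\<forall>i\<in>{1..n}. Delta i 0 0 = 1"
  shows
    "let S = states n m;
         i1 = Min N;
         Pc = crested1 n m C N p0 P;
         M = (\<lambda>i. if i \<in> N then signorm (sigma i) else U i);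
         UU = (\<lambda>x y. (\<Sum>k\<in>{i1<..n}.
                 kron n (\<lambda>j. if j < k then M j
                              else if j = k then (\<lambda>a b. U k a b - Amat a b)
                              else Amat) x y)
               + kron n (\<lambda>j. if j \<le> i1 then U j else Amat) x y);
         DD = kron n (\<lambda>i. diagm (sigma i));
         DDelta = (\<lambda>x y.
               (\<Sum>i\<in>C. p0 i * kron n (\<lambda>j. if j = i then Delta i else idm) x y)
             + (\<Sum>i\<in>N. p0 i * kron n (\<lambda>j. if j < i then idm
                                               else if j = i then Delta i else Jdiag) x y))
     in (\<exists>s. mat_eq_on S DD (diagm s) \<and> prob_measure_on S s \<and> detailed_balance S s Pc)
        \<and> is_diag_on S DDelta
        \<and> mat_eq_on S (mmult S Pc UU) (mmult S UU DDelta)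
        \<and> mat_eq_on S (mmult S (mmult S (mtrans UU) DD) UU) idm"
proof -
  interpret cr n m P U Delta sigma C N p0
    using assms by unfold_locales auto
  show ?thesis
    using main unfolding Let_def UU_def MM_def DD_def DDelta_def Pc_def i1_def .
qed


end
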